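(* Let $\mathcal L\in C^1([0,\infty))$ satisfy $\mathcal L'(t)+2b\mathcal L(t)\le c+a\mathcal L^2(t)$ for every $t\ge0$, where $a,b,c>0$ and $\varrho:=\frac{b}{\sqrt{ac}}>1$. There exists a time $t_\varrho>0$ depending only on $\varrho$ such that: if $\mathcal L(0)\le\sqrt{c/a}\,(2\varrho-1)$, then $$\sup_{t\ge t_\varrho/\sqrt{ac}}\mathcal L(t)\le\sqrt{\frac ca}\,\frac{1}{2\varrho-1}.$$ *)

theory Defs
  imports "HOL-Analysis.Analysis"
begin

end

theory Submission
  imports Defs
begin

lemma barrier:
  fixes L L' :: "real \<Rightarrow> real" and lo hi e t1 :: real
  assumes e: "e > 0" and lohi: "lo \<le> hi"
    and der: "\<forall>t\<ge>0. (L has_real_derivative L' t) (at t within {0..})"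
    and L0: "L 0 \<le> hi"
    and bnd: "\<And>t. t \<ge> 0 \<Longrightarrow> lo \<le> L t \<Longrightarrow> L t \<le> hi \<Longrightarrow> L' t \<le> -e"
    and t1: "t1 \<ge> 0"
  shows "L t1 \<le> max lo (hi - e/2 * t1)"
proof (rule ccontr)
  define G where "G = (\<lambda>t::real. max lo (hi - e/2*t))"
  assume "\<not> ?thesis"
  hence gt: "L t1 > G t1" unfolding G_def by linarith
  have contL: "continuous_on {0..} L"
    unfolding continuous_on_eq_continuous_within using der DERIV_continuous by (metis atLeast_iff)
  have contG: "continuous_on UNIV G" unfolding G_def by (intro continuous_intros)
  define A where "A = {0..t1} \<inter> (\<lambda>t. L t - G t) -` {..0}"
  have clA: "closed A" unfolding A_def
  proof (rule continuous_closed_preimage)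
    show "continuous_on {0..t1} (\<lambda>t. L t - G t)"
      by (intro continuous_intros continuous_on_subset[OF contL] continuous_on_subset[OF contG]) auto
  qed auto
  have A0: "0 \<in> A" using L0 lohi t1 by (auto simp: A_def G_def)
  have bdd: "bdd_above A" by (auto simp: A_def bdd_above_def)
  define \<tau>0 where "\<tau>0 = Sup A"
  have "\<tau>0 \<in> A" unfolding \<tau>0_def using closed_contains_Sup clA bdd A0 by blast
  hence \<tau>0: "0 \<le> \<tau>0" "\<tau>0 \<le> t1" "L \<tau>0 \<le> G \<tau>0" by (auto simp: A_def)
  have "\<tau>0 \<noteq> t1" using gt \<tau>0 by auto
  hence lt: "\<tau>0 < t1" using \<tau>0 by auto
  have after: "L \<tau> > G \<tau>" if "\<tau>0 < \<tau>" "\<tau> \<le> t1" for \<tau>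
  proof (rule ccontr)
    assume "\<not> L \<tau> > G \<tau>"
    hence "\<tau> \<in> A" using that \<tau>0 by (auto simp: A_def)
    hence "\<tau> \<le> \<tau>0" unfolding \<tau>0_def using bdd by (rule cSup_upper)
    thus False using that by auto
  qed
  have ev_lt: "eventually (\<lambda>\<tau>. \<tau> \<in> {\<tau>0<..<t1}) (at_right \<tau>0)"
    using eventually_at_right_real[OF lt] .
  have sub: "{\<tau>0<..} \<subseteq> {0..}" using \<tau>0 by auto
  have Lr: "(L \<longlongrightarrow> L \<tau>0) (at_right \<tau>0)"
    using contL \<tau>0(1) unfolding continuous_on_def
    by (meson atLeast_iff tendsto_within_subset sub)
  have lo_le: "lo \<le> L \<tau>0"
  proof (rule ccontr)
    assume "\<not> lo \<le> L \<tau>0"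
    hence "eventually (\<lambda>\<tau>. L \<tau> < lo) (at_right \<tau>0)"
      using Lr order_tendstoD(2) by force
    with ev_lt have "eventually (\<lambda>\<tau>. False) (at_right \<tau>0)"
    proof (eventually_elim)
      case (elim \<tau>)
      hence "L \<tau> > G \<tau>" using after by auto
      thus False using elim by (auto simp: G_def)
    qed
    thus False by (simp add: eventually_False)
  qed
  have hi_ge: "L \<tau>0 \<le> hi" proof -
    have "e/2*\<tau>0 \<ge> 0" using e \<tau>0 by simp
    thus ?thesis using \<tau>0(3) lohi unfolding G_def by linarith
  qed
  have dL: "L' \<tau>0 \<le> -e" using bnd \<tau>0(1) lo_le hi_ge by blast
  have quot: "((\<lambda>\<tau>. (L \<tau> - L \<tau>0)/(\<tau> - \<tau>0)) \<longlongrightarrow> L' \<tau>0) (at_right \<tau>0)"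
    using der \<tau>0(1) has_field_derivative_iff tendsto_within_subset sub by blast
  hence "eventually (\<lambda>\<tau>. (L \<tau> - L \<tau>0)/(\<tau> - \<tau>0) < -3*e/4) (at_right \<tau>0)"
    using dL e order_tendstoD(2) by force
  with ev_lt have "eventually (\<lambda>\<tau>. False) (at_right \<tau>0)"
  proof (eventually_elim)
    case (elim \<tau>)
    hence pos: "\<tau> - \<tau>0 > 0" and t1': "\<tau> \<le> t1" by auto
    have "L \<tau> > G \<tau>" using after elim by auto
    moreover have "G \<tau> \<ge> G \<tau>0 - e/2*(\<tau> - \<tau>0)" proof -
      have "e*(\<tau> - \<tau>0) \<ge> 0" using e pos by simp
      moreover have "e*(\<tau> - \<tau>0) = e*\<tau> - e*\<tau>0" by (simp add: algebra_simps)
      ultimately show ?thesis unfolding G_def by (auto simp add: max_def field_simps)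
    qed
    ultimately have "L \<tau> - L \<tau>0 > -e/2*(\<tau> - \<tau>0)" using \<tau>0(3) by linarith
    moreover have "L \<tau> - L \<tau>0 < -3*e/4*(\<tau> - \<tau>0)"
      using elim pos by (simp add: pos_divide_less_eq)
    moreover have "e*(\<tau> - \<tau>0) > 0" using pos e by simp
    moreover have "-e/2*(\<tau> - \<tau>0) = -(1/2)*(e*(\<tau> - \<tau>0))" by simp
    moreover have "-3*e/4*(\<tau> - \<tau>0) = -(3/4)*(e*(\<tau> - \<tau>0))" by simp
    ultimately show False by linarith
  qed
  thus False by (simp add: eventually_False)
qed

lemma quad_bound:
  fixes \<rho> m M y :: real
  assumes "\<rho> > 1" "m = 1/(2*\<rho>-1)" "M = 2*\<rho>-1" "m \<le> y" "y \<le> M"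
  shows "y^2 - 2*\<rho>*y + 1 \<le> -(m*(1-m))"
proof -
  have mM: "m*M = 1" using assms by simp
  have sum: "m + M - 2*\<rho> = m - 1" using assms by simp
  have m1: "m < 1" using assms by (simp add: divide_less_eq)
  have "(y-m)*(y-M) \<le> 0" using assms(4,5) by (simp add: mult_nonneg_nonpos)
  moreover have "(y-m)*(y-M) + (m-1)*y = y^2 - 2*\<rho>*y + 1 + y*(2*\<rho>-M-1) + (m*M - 1)"
    by (simp add: algebra_simps power2_eq_square)
  moreover have "(m-1)*y \<le> (m-1)*m" using m1 assms(4) by (simp add: mult_left_mono_neg)
  moreover have "y*(2*\<rho>-M-1) = 0" using assms(3) by simp
  moreover have "(m-1)*m = -(m*(1-m))" by (simp add: algebra_simps)
  ultimately show ?thesis using mM by linarith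
qed

theorem lemma5p2:
  fixes \<rho> :: real
  assumes "\<rho> > 1"
  shows "\<exists>t\<rho>::real. t\<rho> > 0 \<and>
    (\<forall>(a::real) (b::real) (c::real) (L::real \<Rightarrow> real) (L'::real \<Rightarrow> real).
       a > 0 \<longrightarrow> b > 0 \<longrightarrow> c > 0 \<longrightarrow> b / sqrt (a * c) = \<rho> \<longrightarrow>
       (\<forall>t\<ge>0. (L has_real_derivative L' t) (at t within {0..})) \<longrightarrow>
       continuous_on {0..} L' \<longrightarrow>
       (\<forall>t\<ge>0. L' t + 2 * b * L t \<le> c + a * (L t)\<^sup>2) \<longrightarrow>
       L 0 \<le> sqrt (c / a) * (2 * \<rho> - 1) \<longrightarrow>
       (\<forall>t\<ge>t\<rho> / sqrt (a * c). L t \<le> sqrt (c / a) * (1 / (2 * \<rho> - 1))))"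
proof -
  define m where "m = 1/(2*\<rho>-1)"
  define M where "M = 2*\<rho>-1"
  define \<delta> where "\<delta> = m*(1-m)"
  have m0: "m > 0" using assms by (simp add: m_def)
  have m1: "m < 1" using assms by (simp add: m_def divide_less_eq)
  have M1: "M > 1" using assms by (simp add: M_def)
  have d0: "\<delta> > 0" using m0 m1 by (simp add: \<delta>_def)
  define T where "T = 2*(M-m)/\<delta>"
  have T0: "T > 0" using d0 m1 M1 by (simp add: T_def)
  show ?thesis
  proof (intro exI[of _ T] conjI T0 allI impI)
    fix a b c :: real and L L' :: "real \<Rightarrow> real" and t :: real
    assume a: "a > 0" and b: "b > 0" and c: "c > 0" and rho: "b / sqrt (a*c) = \<rho>"
      and der: "\<forall>t\<ge>0. (L has_real_derivative L' t) (at t within {0..})"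
      and ineq: "\<forall>t\<ge>0. L' t + 2 * b * L t \<le> c + a * (L t)\<^sup>2"
      and L0: "L 0 \<le> sqrt (c / a) * (2 * \<rho> - 1)"
      and tT: "t \<ge> T / sqrt (a*c)"
    define k where "k = sqrt (c/a)"
    define sq where "sq = sqrt (a*c)"
    have k0: "k > 0" using a c by (simp add: k_def)
    have sq0: "sq > 0" using a c by (simp add: sq_def)
    have ksq: "k * sq = c"
    proof -
      have "k * sq = sqrt (c/a) * sqrt (a*c)" by (simp add: k_def sq_def)
      also have "\<dots> = sqrt (c/a * (a*c))" by (rule real_sqrt_mult[symmetric])
      also have "c/a*(a*c) = c^2" using a by (simp add: power2_eq_square)
      finally show ?thesis using c by simp
    qed
    have ak: "a*k^2 = c" using a c by (simp add: k_def)
    have bk: "b*k = \<rho>*c" using rho ksq sq0 by (simp add: sq_def[symmetric] field_simps)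
    have bar: "L t \<le> max (k*m) (k*M - (c*\<delta>)/2 * t)"
    proof (rule barrier[where L'=L'])
      show "c*\<delta> > 0" using c d0 by simp
      show "k*m \<le> k*M" using k0 m1 M1 by simp
      show "\<forall>t\<ge>0. (L has_real_derivative L' t) (at t within {0..})" by (rule der)
      show "L 0 \<le> k*M" using L0 by (simp add: k_def M_def)
      show "0 \<le> t" proof -
        have "T / sqrt (a*c) > 0" using T0 a c by simp
        thus ?thesis using tT by linarith
      qed
    next
      fix \<tau> :: real assume \<tau>: "0 \<le> \<tau>" "k*m \<le> L \<tau>" "L \<tau> \<le> k*M"
      define y where "y = L \<tau> / k"
      have Ly: "L \<tau> = k*y" using k0 by (simp add: y_def)
      have y1: "m \<le> y" "y \<le> M" using \<tau> k0 Ly by (simp_all add: mult_le_cancel_left_pos)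
      have q: "y^2 - 2*\<rho>*y + 1 \<le> -\<delta>"
        using quad_bound[OF assms m_def M_def y1] by (simp add: \<delta>_def)
      have "L' \<tau> \<le> c + a*(L \<tau>)^2 - 2*b*L \<tau>" using ineq \<tau>(1) by fastforce
      also have "\<dots> = c*(y^2 - 2*\<rho>*y + 1)"
      proof -
        have "a*(L \<tau>)^2 = c*y^2" using ak Ly by (simp add: power_mult_distrib)
        moreover have "2*b*L \<tau> = 2*\<rho>*c*y" using bk Ly by (simp add: algebra_simps)
        ultimately show ?thesis by (simp add: algebra_simps)
      qed
      also have "\<dots> \<le> c*(-\<delta>)" using mult_left_mono[OF q, of c] c by simp
      finally show "L' \<tau> \<le> -(c*\<delta>)" by simp
    qed
    have "(c*\<delta>)/2 * t \<ge> (c*\<delta>)/2 * (T/sq)" using mult_left_mono[OF tT, of "c*\<delta>/2"] c d0 by (simp add: sq_def)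
    also have "(c*\<delta>)/2 * (T/sq) = k*(M-m)" using d0 sq0 unfolding ksq[symmetric] by (simp add: T_def field_simps)
    finally have "k*M - (c*\<delta>)/2 * t \<le> k*m" by (simp add: algebra_simps)
    with bar have "L t \<le> k*m" by simp
    thus "L t \<le> sqrt (c / a) * (1 / (2 * \<rho> - 1))" by (simp add: k_def m_def)
  qed
qed

end
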